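(* Let $A=(a_i)_{i\ge1}$ be a weakly increasing multisubset of $\mathbb{N}$ such that $\underline{d}(A^{\#})=1$, and let $\epsilon>0$. Then for all sufficiently large integers $h$ (depending on $\epsilon$ and $A$) there exist an integer $n$ and a set $\mathscr{J}\subseteq A^{\#}\cap[a_n,(1+\epsilon)a_n]$ such that \[ h=\sum_{i=1}^{n}a_i+\sum_{x\in\mathscr{J}}x, \] where $n$ depends on $h$ and $n\to\infty$ as $h\to\infty$.
   Context: A multisubset $A$ of $\mathbb{N}$ (positive integers) is a collection of positive integers with repetitions allowed, each integer occurring only finitely often; writing $A=(a_i)$ means $a_1\le a_2\le\cdots$ lists the elements of $A$ (with multiplicity) in non-decreasing order. $A$ is weakly increasing if for each $\epsilon>0$ there is $\delta>0$ such that $a_{\lfloor(1+\epsilon)n\rfloor}/a_n>1+\delta$ for all sufficiently large $n$ (depending on $\epsilon$). $A^{\#}\subseteq\mathbb{N}$ is the set of integers appearing at least once in $A$. For $X\subseteq\mathbb{N}$, the lower asymptotic density is $\underline{d}(X)=\liminf_{n\to\infty}|X\cap[1,n]|/n$. *)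

theory Defs
  imports "HOL-Analysis.Analysis"
begin

text \<open>A multisubset A of positive integers, listed (1-indexed) in non-decreasing
order as a 1, a 2, ...; each value occurs only finitely often. The value a 0 is irrelevant.\<close>
definition multiset_seq :: "(nat \<Rightarrow> nat) \<Rightarrow> bool" where
  "multiset_seq a \<longleftrightarrow> (\<forall>i\<ge>1. a i > 0) \<and> (\<forall>i\<ge>1. a i \<le> a (Suc i))
     \<and> (\<forall>x. finite {i. i \<ge> 1 \<and> a i = x})"

definition weakly_increasing :: "(nat \<Rightarrow> nat) \<Rightarrow> bool" where
  "weakly_increasing a \<longleftrightarrow> (\<forall>\<epsilon>::real>0. \<exists>\<delta>::real>0. \<forall>\<^sub>F n in sequentially.
      real (a (nat \<lfloor>(1 + \<epsilon>) * real n\<rfloor>)) / real (a n) > 1 + \<delta>)"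

definition Asharp :: "(nat \<Rightarrow> nat) \<Rightarrow> nat set" where
  "Asharp a = {a i | i. i \<ge> 1}"

definition lower_density :: "nat set \<Rightarrow> ereal" where
  "lower_density X = liminf (\<lambda>n. ereal (real (card (X \<inter> {1..n})) / real n))"

end

theory Submission imports Defs begin

lemma comb:
  fixes B :: "nat set" and k m M e T :: nat
  assumes k3: "3 \<le> k" and miss: "card ({m..M} - B) \<le> e"
  and lo: "k * (m + ((k-1)*(k-2)*(e+1) + 2*e + k)) \<le> T"
  and hi: "T + k * ((k-1)*(k-2)*(e+1) + 2*e + k) \<le> k * M"
  shows "\<exists>J. J \<subseteq> B \<inter> {m..M} \<and> sum (\<lambda>x. x) J = T"
proof -
  define e' where "e' = e+1"
  define Z where "Z = (k-1)*(k-2)*e'"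
  define D where "D = Z + 2*e + k"
  define v where "v = T div k"
  have kpos: "k > 0" using k3 by simp
  have kv: "k* v \<le> T" "T < k* v + k" unfolding v_def
    using kpos by (simp_all add: mult.commute) (metis add.commute div_mult_mod_eq mod_less_divisor add_less_mono1 mult.commute nat_add_left_cancel_less)
  have lo': "k*(m+D) \<le> T" using lo unfolding D_def Z_def e'_def by simp
  have hi': "T + k*D \<le> k*M" using hi unfolding D_def Z_def e'_def by simp
  have vlo: "m + D \<le> v" unfolding v_def using lo' kpos
    by (metis div_le_mono nonzero_mult_div_cancel_left not_less0)
  have "k*(v+D) \<le> k*M" using kv(1) hi' by (simp add: distrib_left)
  hence vhi: "v + D \<le> M" using kpos by simp
  have Zge: "(k-2)*e' \<le> Z"
  proof -
    have "1*((k-2)*e') \<le> (k-1)*((k-2)*e')" using k3 by (intro mult_le_mono1) simp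
    thus ?thesis unfolding Z_def by (simp add: mult.assoc)
  qed
  have Zeq: "Z = (k-2)*((k-2)*e') + (k-2)*e'" unfolding Z_def
  proof -
    have "k = (k-2) + 2" using k3 by simp
    then obtain j where "k = j + 2" by blast
    thus "(k - 1) * (k - 2) * e' = (k - 2) * ((k - 2) * e') + (k - 2) * e'"
      by (simp add: algebra_simps)
  qed
  have Z1: "2 \<le> Z"
  proof -
    have a1: "1 \<le> (k-2)*e'" unfolding e'_def using k3 by simp
    have "1*((k-2)*e') \<le> (k-2)*((k-2)*e')" using k3 by (intro mult_le_mono1) simp
    thus ?thesis using a1 Zeq by linarith
  qed
  have gap: "\<exists>y\<in>B. u \<le> y \<and> y \<le> u + e" if "m \<le> u" "u + e \<le> M" for u
  proof (rule ccontr)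
    assume "\<not> ?thesis"
    hence "{u..u+e} \<subseteq> {m..M} - B" using that by auto
    hence "card {u..u+e} \<le> card ({m..M} - B)" by (intro card_mono) auto
    thus False using miss by simp
  qed
  have "\<forall>i. \<exists>y. i < k-2 \<longrightarrow> (y \<in> B \<and> v + i*e' \<le> y \<and> y \<le> v + i*e' + e)"
  proof
    fix i
    show "\<exists>y. i < k-2 \<longrightarrow> (y \<in> B \<and> v + i*e' \<le> y \<and> y \<le> v + i*e' + e)"
    proof (cases "i < k-2")
      case True
      have "(i+1)*e' \<le> (k-2)*e'" using True by (intro mult_le_mono1) simp
      hence "v + i*e' + e \<le> M" using Zge vhi unfolding D_def e'_def by (simp add: algebra_simps)
      moreover have "m \<le> v + i*e'" using vlo by simp
      ultimately show ?thesis using gap by blast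
    qed simp
  qed
  then obtain c where c: "\<And>i. i < k-2 \<Longrightarrow> c i \<in> B \<and> v + i*e' \<le> c i \<and> c i \<le> v + i*e' + e"
    by metis
  define W where "W = v + (k-2)*e'"
  have cW: "v \<le> c i \<and> c i < W" if "i < k-2" for i
  proof -
    have "(i+1)*e' \<le> (k-2)*e'" using that by (intro mult_le_mono1) simp
    moreover have "(i+1)*e' = i*e' + e'" by simp
    ultimately show ?thesis using c[OF that] unfolding W_def e'_def by linarith
  qed
  have inj: "inj_on c {..<k-2}"
  proof (rule inj_onI)
    fix i j assume ij: "i \<in> {..<k-2}" "j \<in> {..<k-2}" "c i = c j"
    show "i = j"
    proof (rule ccontr)
      assume "i \<noteq> j"
      then consider "i < j" | "j < i" by linarith
      thus False
      proof cases
        case 1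
        have "(i+1)*e' \<le> j*e'" using 1 by (intro mult_le_mono1) simp
        moreover have "(i+1)*e' = i*e' + e'" "(j+1)*e' = j*e' + e'" by simp_all
        ultimately show False using c[of i] c[of j] ij unfolding e'_def by auto
      next
        case 2
        have "(j+1)*e' \<le> i*e'" using 2 by (intro mult_le_mono1) simp
        moreover have "(i+1)*e' = i*e' + e'" "(j+1)*e' = j*e' + e'" by simp_all
        ultimately show False using c[of i] c[of j] ij unfolding e'_def by auto
      qed
    qed
  qed
  define J0 where "J0 = c ` {..<k-2}"
  define S0 where "S0 = sum (\<lambda>x. x) J0"
  have S0eq: "S0 = (\<Sum>i<k-2. c i)" unfolding S0_def J0_def using sum.reindex[OF inj] by simp
  have S0lo: "(k-2)* v \<le> S0"
  proof -
    have "(\<Sum>i<k-2. v) \<le> (\<Sum>i<k-2. c i)" by (intro sum_mono) (use cW in auto)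
    thus ?thesis using S0eq by simp
  qed
  have S0hi: "S0 \<le> (k-2)*W"
  proof -
    have "(\<Sum>i<k-2. c i) \<le> (\<Sum>i<k-2. W)" by (intro sum_mono) (use cW in force)
    thus ?thesis using S0eq by simp
  qed
  have J0W: "\<And>z. z \<in> J0 \<Longrightarrow> v \<le> z \<and> z < W" unfolding J0_def using cW by auto
  have J0B: "J0 \<subseteq> B" unfolding J0_def using c by auto
  have WM: "W \<le> M" unfolding W_def using Zge vhi unfolding D_def by simp
  define X where "X = {v - Z - 2*e .. v - Z}"
  have vZ: "Z + 2*e + m \<le> v" using vlo unfolding D_def by simp
  have cardX: "card X = 2*e+1" unfolding X_def using vZ by simp
  have kvsplit: "k* v = (k-2)* v + 2* v" using k3 by (simp add: algebra_simps flip: add_mult_distrib)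
  have W2: "(k-2)*W = (k-2)* v + (k-2)*((k-2)*e')" unfolding W_def by (simp add: algebra_simps)
  have xfacts: "S0 + x + W \<le> T \<and> T \<le> S0 + x + M \<and> m \<le> x \<and> x \<le> M \<and> x + 2 \<le> v" if "x \<in> X" for x
  proof -
    have x1: "v \<le> x + Z + 2*e" "x + Z \<le> v" using that vZ unfolding X_def by auto
    have "S0 + x + W \<le> T" using S0hi W2 Zeq x1 kv kvsplit unfolding W_def by linarith
    moreover have "T \<le> S0 + x + M" using kv(2) S0lo x1 vhi kvsplit unfolding D_def by linarith
    ultimately show ?thesis using x1 vZ vhi Z1 unfolding D_def by linarith
  qed
  define R where "R = T - S0"
  define bad1 where "bad1 = {x\<in>X. x \<notin> B}"
  define bad2 where "bad2 = {x\<in>X. R - x \<notin> B}"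
  have b1: "card bad1 \<le> e"
  proof -
    have "bad1 \<subseteq> {m..M} - B" unfolding bad1_def using xfacts by auto
    hence "card bad1 \<le> card ({m..M} - B)" by (intro card_mono) auto
    thus ?thesis using miss by simp
  qed
  have b2: "card bad2 \<le> e"
  proof -
    have "inj_on (\<lambda>x. R - x) bad2"
    proof (rule inj_onI)
      fix x y assume xy: "x \<in> bad2" "y \<in> bad2" "R - x = R - y"
      have "S0 + x \<le> T" "S0 + y \<le> T" using xy xfacts unfolding bad2_def by fastforce+
      thus "x = y" using xy(3) unfolding R_def by linarith
    qed
    hence "card bad2 = card ((\<lambda>x. R - x) ` bad2)" by (simp add: card_image)
    also have "(\<lambda>x. R - x) ` bad2 \<subseteq> {m..M} - B"
    proof
      fix y assume "y \<in> (\<lambda>x. R - x) ` bad2"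
      then obtain x where x: "x \<in> X" "R - x \<notin> B" "y = R - x" unfolding bad2_def by auto
      have "m \<le> R - x \<and> R - x \<le> M" using xfacts[OF x(1)] WM vZ unfolding R_def
        using J0W cW WM unfolding W_def by linarith
      thus "y \<in> {m..M} - B" using x by auto
    qed
    hence "card ((\<lambda>x. R - x) ` bad2) \<le> card ({m..M} - B)" by (intro card_mono) auto
    finally show ?thesis using miss by simp
  qed
  have "card (bad1 \<union> bad2) \<le> 2*e" using card_Un_le[of bad1 bad2] b1 b2 by simp
  moreover have "finite (bad1 \<union> bad2)" unfolding bad1_def bad2_def X_def by simp
  ultimately have "\<not> X \<subseteq> bad1 \<union> bad2"
    using cardX card_mono[of "bad1 \<union> bad2" X] by linarith
  then obtain x where x: "x \<in> X" "x \<notin> bad1" "x \<notin> bad2" by auto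
  define y where "y = R - x"
  have xB: "x \<in> B" and yB: "y \<in> B" using x unfolding bad1_def bad2_def y_def by auto
  have xf: "S0 + x + W \<le> T" "T \<le> S0 + x + M" "m \<le> x" "x \<le> M" "x + 2 \<le> v" using xfacts[OF x(1)] by auto
  have yW: "W \<le> y" "y \<le> M" using xf unfolding y_def R_def by linarith+
  have xy: "x \<noteq> y" using xf yW unfolding W_def by linarith
  have xJ0: "x \<notin> J0" using J0W xf by force
  have yJ0: "y \<notin> J0" using J0W yW by force
  have fin: "finite J0" unfolding J0_def by simp
  define J where "J = insert x (insert y J0)"
  have "sum (\<lambda>x. x) J = x + y + S0" unfolding J_def S0_def using fin xJ0 yJ0 xy by simp
  also have "\<dots> = T" using xf unfolding y_def R_def by linarith
  finally have sJ: "sum (\<lambda>x. x) J = T" .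
  have i1: "x \<in> {m..M}" "y \<in> {m..M}" using xf yW vZ unfolding W_def by auto
  have i2: "J0 \<subseteq> {m..M}"
  proof
    fix z assume "z \<in> J0"
    hence "v \<le> z \<and> z < W" by (rule J0W)
    thus "z \<in> {m..M}" using WM vZ by auto
  qed
  have "J \<subseteq> B \<inter> {m..M}" unfolding J_def using xB yB i1 i2 J0B by blast
  thus ?thesis using sJ by blast
qed

lemma mono_a:
  assumes "multiset_seq a" "1 \<le> i" "i \<le> j"
  shows "a i \<le> a j"
  using assms(3)
proof (induction j rule: dec_induct)
  case base then show ?case by simp
next
  case (step n)
  have "a n \<le> a (Suc n)" using assms(1) assms(2) step(1) unfolding multiset_seq_def by auto
  thus ?case using step(3) by simp
qed

lemma unbounded:
  assumes "multiset_seq a"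
  shows "\<exists>n1\<ge>1. \<forall>i\<ge>n1. b \<le> a i"
proof -
  define S where "S = {i. 1 \<le> i \<and> a i < b}"
  have "S \<subseteq> (\<Union>x\<in>{..<b}. {i. i \<ge> 1 \<and> a i = x})" unfolding S_def by auto
  moreover have "finite (\<Union>x\<in>{..<b}. {i. i \<ge> 1 \<and> a i = x})"
    using assms unfolding multiset_seq_def by auto
  ultimately have fin: "finite S" by (rule finite_subset)
  define i0 where "i0 = Suc (Max (insert 0 S))"
  have "i0 \<notin> S"
  proof
    assume "i0 \<in> S"
    hence "i0 \<le> Max (insert 0 S)" using fin by simp
    thus False unfolding i0_def by simp
  qed
  hence b0: "b \<le> a i0" unfolding S_def i0_def by auto
  have "\<forall>i\<ge>i0. b \<le> a i"
  proof (intro allI impI)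
    fix i assume "i0 \<le> i"
    hence "a i0 \<le> a i" using mono_a[OF assms] unfolding i0_def by simp
    thus "b \<le> a i" using b0 by simp
  qed
  thus ?thesis unfolding i0_def by auto
qed

lemma density:
  fixes X :: "nat set" and P :: nat
  assumes "lower_density X = 1" "0 < P"
  shows "\<exists>q0. \<forall>q\<ge>q0. P * card ({1..q} - X) \<le> q"
proof -
  have "ereal (1 - 1 / real P) < liminf (\<lambda>n. ereal (real (card (X \<inter> {1..n})) / real n))"
    using assms unfolding lower_density_def by simp
  hence "\<forall>\<^sub>F n in sequentially. ereal (1 - 1 / real P) < ereal (real (card (X \<inter> {1..n})) / real n)"
    by (rule less_LiminfD)
  then obtain q1 where q1: "\<And>n. n \<ge> q1 \<Longrightarrow> 1 - 1 / real P < real (card (X \<inter> {1..n})) / real n"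
    unfolding eventually_sequentially by auto
  have "P * card ({1..q} - X) \<le> q" if "q \<ge> Suc q1" for q
  proof -
    define cc where "cc = card (X \<inter> {1..q})"
    have qpos: "real q > 0" using that by simp
    have h: "1 - 1 / real P < real cc / real q" using q1[of q] that unfolding cc_def by simp
    have ccq: "cc \<le> q" unfolding cc_def by (metis card_atLeastAtMost card_mono diff_Suc_1 finite_atLeastAtMost inf_le2)
    have cd: "card ({1..q} - X) = q - cc" unfolding cc_def
      by (simp add: card_Diff_subset_Int Int_commute)
    have "(1 - 1 / real P) * real q < real cc" using h qpos by (simp add: field_simps)
    hence "real P * real q - real q < real P * real cc" using assms(2) by (simp add: field_simps)
    hence "real P * (real q - real cc) \<le> real q" by (simp add: algebra_simps)
    hence "real (P * (q - cc)) \<le> real q" using ccq by (simp add: of_nat_diff)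
    thus ?thesis using cd by (simp only: of_nat_le_iff)
  qed
  thus ?thesis by blast
qed

lemma jump:
  assumes ms: "multiset_seq a" and "1 \<le> N" "N \<le> n"
  shows "a n + 1 \<le> a N + (n + 1 - N) + card ({1..a n} - Asharp a)"
proof -
  have pos: "0 < a N" using ms assms(2) unfolding multiset_seq_def by auto
  have sub: "{a N..a n} \<subseteq> a ` {N..n} \<union> ({1..a n} - Asharp a)"
  proof
    fix x assume x: "x \<in> {a N..a n}"
    show "x \<in> a ` {N..n} \<union> ({1..a n} - Asharp a)"
    proof (cases "x \<in> Asharp a")
      case True
      then obtain i where i: "i \<ge> 1" "x = a i" unfolding Asharp_def by auto
      consider "i < N" | "N \<le> i \<and> i \<le> n" | "n < i" by linarith
      thus ?thesis
      proof cases
        case 1 hence "a i \<le> a N" using mono_a[OF ms i(1)] by simp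
        hence "x = a N" using x i by simp
        thus ?thesis using assms by auto
      next
        case 2 thus ?thesis using i by auto
      next
        case 3 hence "a n \<le> a i" using mono_a[OF ms] assms by simp
        hence "x = a n" using x i by simp
        thus ?thesis using assms by auto
      qed
    next
      case False thus ?thesis using x pos by auto
    qed
  qed
  have "card {a N..a n} \<le> card (a ` {N..n} \<union> ({1..a n} - Asharp a))"
    using sub by (intro card_mono) auto
  also have "\<dots> \<le> card (a ` {N..n}) + card ({1..a n} - Asharp a)" by (rule card_Un_le)
  also have "card (a ` {N..n}) \<le> n + 1 - N" using card_image_le[of "{N..n}" a] by simp
  finally show ?thesis by simp
qed

lemma sum_split:
  fixes N n :: nat and f :: "nat \<Rightarrow> nat"
  assumes "N \<le> n"
  shows "(\<Sum>i=1..n. f i) = (\<Sum>i=1..N. f i) + (\<Sum>i\<in>{N<..n}. f i)"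
proof -
  have "{1..n} = {1..N} \<union> {N<..n}"
  proof (rule set_eqI)
    fix x show "x \<in> {1..n} \<longleftrightarrow> x \<in> {1..N} \<union> {N<..n}" using assms by auto
  qed
  moreover have "{1..N} \<inter> {N<..n} = {}" by auto
  ultimately show ?thesis by (simp add: sum.union_disjoint)
qed


theorem lemma4p2:
  fixes a :: "nat \<Rightarrow> nat" and \<epsilon> :: real
  assumes "multiset_seq a" and "weakly_increasing a"
    and "lower_density (Asharp a) = 1" and "\<epsilon> > 0"
  shows "\<exists>(N :: nat \<Rightarrow> nat) (J :: nat \<Rightarrow> nat set).
           filterlim N at_top at_top \<and>
           (\<forall>\<^sub>F h in sequentially.
              J h \<subseteq> Asharp a \<inter> {x. a (N h) \<le> x \<and> real x \<le> (1 + \<epsilon>) * real (a (N h))} \<and>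
              h = (\<Sum>i=1..N h. a i) + (\<Sum>x\<in>J h. x))"
proof -
  note ms = assms(1)
  have apos: "\<And>i. 1 \<le> i \<Longrightarrow> 1 \<le> a i" using ms unfolding multiset_seq_def by (simp add: Suc_le_eq)
  obtain r :: nat where r: "1 / \<epsilon> < real r" using reals_Archimedean2 by blast
  have "0 < 1/\<epsilon>" using assms(4) by simp
  hence rpos: "0 < real r" using r by linarith
  hence r1: "1 \<le> r" by simp
  have re: "1 \<le> real r * \<epsilon>" using r assms(4) by (simp add: field_simps)
  define k where "k = 4*r"
  define K where "K = k + 1"
  define c where "c = k*(k*k+2)"
  define P where "P = 8*c + 6*(k+2)"
  have k4: "4 \<le> k" unfolding k_def using r1 by simp
  have c1: "1 \<le> c" unfolding c_def using k4 by simp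
  have Ppos: "0 < P" unfolding P_def by simp
  obtain q0 where q0: "\<And>q. q \<ge> q0 \<Longrightarrow> P * card ({1..q} - Asharp a) \<le> q"
    using density[OF assms(3) Ppos] by blast
  define m0 where "m0 = 4*c + 4*(k*k) + (k+2)*(k+2) + 4*r + 2*k + 4 + q0 + 1"
  obtain n1 where n1: "1 \<le> n1" "\<And>i. i \<ge> n1 \<Longrightarrow> m0 \<le> a i" using unbounded[OF ms, of m0] by blast
  define S where "S = (\<lambda>n. \<Sum>i=1..n. a i)"
  have Smono: "S i \<le> S j" if "i \<le> j" for i j
    unfolding S_def using that by (intro sum_mono2) auto
  have Sge: "n \<le> S n" for n
  proof -
    have "(\<Sum>i=1..n. (1::nat)) \<le> (\<Sum>i=1..n. a i)" by (intro sum_mono) (use apos in auto)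
    thus ?thesis unfolding S_def by simp
  qed
  define nn where "nn = (\<lambda>h. LEAST n. h < S (Suc n))"
  have nn_prop: "S (nn h) \<le> h \<and> h < S (Suc (nn h))" for h
  proof -
    have ex: "\<exists>n. h < S (Suc n)" using Sge[of "Suc h"] by (intro exI[of _ h]) simp
    have 1: "h < S (Suc (nn h))" unfolding nn_def by (rule LeastI_ex[OF ex])
    have 2: "S (nn h) \<le> h"
    proof (cases "nn h")
      case 0 thus ?thesis unfolding S_def by simp
    next
      case (Suc p)
      have "\<not> h < S (Suc p)" unfolding nn_def
        by (rule not_less_Least) (use Suc in \<open>simp add: nn_def\<close>)
      thus ?thesis using Suc by simp
    qed
    show ?thesis using 1 2 by simp
  qed
  have nn_big: "Z \<le> nn h" if "S Z \<le> h" for Z h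
  proof (rule ccontr)
    assume "\<not> Z \<le> nn h"
    hence "S (Suc (nn h)) \<le> S Z" by (intro Smono) simp
    thus False using nn_prop[of h] that by simp
  qed
  define N where "N = (\<lambda>h. nn h - K)"
  have lim: "filterlim N at_top at_top"
    unfolding filterlim_at_top eventually_sequentially
  proof (intro allI exI[of _ "S (_ + K)"] allI impI)
    fix Z h assume "S (Z + K) \<le> h"
    hence "Z + K \<le> nn h" by (rule nn_big)
    thus "Z \<le> N h" unfolding N_def by simp
  qed
  define good where "good = (\<lambda>h J. J \<subseteq> Asharp a \<inter> {x. a (N h) \<le> x \<and> real x \<le> (1 + \<epsilon>) * real (a (N h))} \<and>
              h = (\<Sum>i=1..N h. a i) + (\<Sum>x\<in>J. x))"
  have key: "\<exists>J. good h J" if hbig: "S (n1 + K) \<le> h" for h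
  proof -
    define n where "n = nn h"
    have nbig: "n1 + K \<le> n" unfolding n_def using nn_big[OF hbig] .
    define Nh where "Nh = N h"
    have Nh: "Nh = n - K" "n = Nh + K" "n1 \<le> Nh" "1 \<le> Nh" using nbig n1(1) unfolding Nh_def N_def n_def by auto
    define m where "m = a Nh"
    have mm0: "m0 \<le> m" unfolding m_def using n1(2) Nh(3) by simp
    define T where "T = h - S Nh"
    have hS: "S n \<le> h" "h < S (Suc n)" using nn_prop[of h] unfolding n_def by auto
    have sp1: "S n = S Nh + (\<Sum>i\<in>{Nh<..n}. a i)" unfolding S_def by (rule sum_split) (use Nh in simp)
    have sp2: "S (Suc n) = S Nh + (\<Sum>i\<in>{Nh<..Suc n}. a i)" unfolding S_def by (rule sum_split) (use Nh in simp)
    have low: "of_nat (card {Nh<..n}) * m \<le> (\<Sum>i\<in>{Nh<..n}. a i)"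
    proof (rule sum_bounded_below)
      fix i assume "i \<in> {Nh<..n}"
      hence "Nh \<le> i" by simp
      thus "m \<le> a i" unfolding m_def by (rule mono_a[OF ms Nh(4)])
    qed
    have high: "(\<Sum>i\<in>{Nh<..Suc n}. a i) \<le> of_nat (card {Nh<..Suc n}) * a (Suc n)"
    proof (rule sum_bounded_above)
      fix i assume i: "i \<in> {Nh<..Suc n}"
      hence "1 \<le> i" "i \<le> Suc n" using Nh(4) by auto
      thus "a i \<le> a (Suc n)" by (rule mono_a[OF ms])
    qed
    have cK: "card {Nh<..n} = K" "card {Nh<..Suc n} = K + 1" using Nh by auto
    define an where "an = a (Suc n)"
    have SNh: "S Nh \<le> h" using Smono[of Nh n] Nh(2) hS(1) by simp
    have Tlo: "K * m \<le> T" using hS sp1 low cK SNh unfolding T_def by simp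
    have "T < (\<Sum>i\<in>{Nh<..Suc n}. a i)" using hS sp2 SNh unfolding T_def by linarith
    moreover have "(\<Sum>i\<in>{Nh<..Suc n}. a i) \<le> (k+2) * an" using high cK unfolding an_def K_def by simp
    ultimately have Thi: "T + 1 \<le> (k+2) * an" by linarith
    define f1 where "f1 = card ({1..an} - Asharp a)"
    have jmp: "an + 1 \<le> m + (k + 3) + f1"
      using jump[OF ms Nh(4), of "Suc n"] Nh(2) unfolding an_def m_def f1_def K_def by simp
    have anm: "m \<le> an" unfolding an_def m_def using mono_a[OF ms Nh(4)] Nh(2) by simp
    have Pf1: "P * f1 \<le> an" unfolding f1_def using q0 anm mm0 unfolding m0_def by simp
    define M where "M = m + m div r"
    define e where "e = card ({1..M} - Asharp a)"
    have Pe: "P * e \<le> M" unfolding e_def using q0 mm0 unfolding M_def m0_def by simp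
    have m1: "1 \<le> m" using mm0 unfolding m0_def by simp
    have miss: "card ({m..M} - Asharp a) \<le> e" unfolding e_def using m1 by (intro card_mono) auto
    define D where "D = (k-1)*(k-2)*(e+1) + 2*e + k"
    have "(k-1)*(k-2) \<le> k*k" by (intro mult_le_mono) auto
    hence "(k-1)*(k-2)*(e+1) \<le> k*k*(e+1)" by (rule mult_le_mono1)
    hence Dle: "D \<le> (k*k+2)*(e+1) + k" unfolding D_def by (simp add: algebra_simps)
    hence "k*D \<le> k*((k*k+2)*(e+1) + k)" by (rule mult_le_mono2)
    hence kD: "k*D \<le> c*e + c + k*k" unfolding c_def by (simp add: algebra_simps)
    have "8*c*e \<le> P*e" unfolding P_def by (intro mult_le_mono1) simp
    moreover have "M \<le> 2*m" unfolding M_def by simp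
    ultimately have ce: "4*(c*e) \<le> m" using Pe by linarith
    have m0c: "4*c + 4*(k*k) \<le> m" using mm0 unfolding m0_def by linarith
    have kDm: "2*(k*D) \<le> m" using kD ce m0c by linarith
    have "(6*(k+2)+1)*f1 \<le> P*f1" unfolding P_def using c1 by (intro mult_le_mono1) simp
    hence "6*((k+2)*f1) + f1 \<le> an" using Pf1 by (simp add: algebra_simps)
    moreover have "k + 2 \<le> m" using mm0 unfolding m0_def by linarith
    ultimately have f1m: "2*((k+2)*f1) \<le> m" using jmp by linarith
    have "(k+2)*an \<le> (k+2)*(m + (k+2) + f1)" using jmp by (intro mult_le_mono2) linarith
    hence an2: "(k+2)*an \<le> k*m + 2*m + (k+2)*(k+2) + (k+2)*f1" by (simp add: algebra_simps)
    have rdiv: "m + 1 \<le> r*(m div r) + r"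
    proof -
      have "m = r*(m div r) + m mod r" by simp
      moreover have "m mod r < r" using r1 by simp
      ultimately show ?thesis by linarith
    qed
    have kM: "k*M = k*m + 4*(r*(m div r))" unfolding M_def k_def by (simp add: algebra_simps)
    have rm: "(k+2)*(k+2) + 4*r \<le> m" using mm0 unfolding m0_def by linarith
    have cond1: "k * (m + D) \<le> T" using Tlo kDm unfolding K_def by (simp add: algebra_simps)
    have cond2: "T + k * D \<le> k * M" using Thi an2 kDm f1m kM rdiv rm by linarith
    obtain J where J: "J \<subseteq> Asharp a \<inter> {m..M}" "sum (\<lambda>x. x) J = T"
      using comb[OF _ miss, of k T] k4 cond1 cond2 unfolding D_def by auto
    have Mle: "real M \<le> (1 + \<epsilon>) * real m"
    proof -
      have "r * (m div r) \<le> m" by simp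
      hence "real r * real (m div r) \<le> real m" by (metis of_nat_le_iff of_nat_mult)
      also have "\<dots> \<le> real m * (real r * \<epsilon>)" using mult_left_mono[OF re, of "real m"] by simp
      finally have "real r * real (m div r) \<le> real r * (\<epsilon> * real m)" by (simp add: algebra_simps)
      hence "real (m div r) \<le> \<epsilon> * real m" using rpos by simp
      thus ?thesis unfolding M_def by (simp add: algebra_simps)
    qed
    have "J \<subseteq> Asharp a \<inter> {x. a (N h) \<le> x \<and> real x \<le> (1 + \<epsilon>) * real (a (N h))}"
    proof
      fix x assume "x \<in> J"
      hence "x \<in> Asharp a" "m \<le> x" "x \<le> M" using J(1) by auto
      moreover have "real x \<le> real M" using \<open>x \<le> M\<close> by simp
      ultimately show "x \<in> Asharp a \<inter> {x. a (N h) \<le> x \<and> real x \<le> (1 + \<epsilon>) * real (a (N h))}"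
        using Mle unfolding m_def Nh_def by auto
    qed
    moreover have "h = S Nh + (\<Sum>x\<in>J. x)" using J(2) SNh unfolding T_def by simp
    hence "h = (\<Sum>i=1..N h. a i) + (\<Sum>x\<in>J. x)" unfolding S_def Nh_def .
    ultimately show ?thesis unfolding good_def by blast
  qed
  define J where "J = (\<lambda>h. SOME J. good h J)"
  have "\<forall>\<^sub>F h in sequentially. good h (J h)"
    unfolding eventually_sequentially J_def using key by (metis someI_ex)
  hence "\<forall>\<^sub>F h in sequentially.
              J h \<subseteq> Asharp a \<inter> {x. a (N h) \<le> x \<and> real x \<le> (1 + \<epsilon>) * real (a (N h))} \<and>
              h = (\<Sum>i=1..N h. a i) + (\<Sum>x\<in>J h. x)" unfolding good_def by simp
  thus ?thesis using lim by blast
qed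

end
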